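(* Let $p$ be a prime and let $A$ and $B$ be nontrivial finite $p$-groups. Define $A_0=A$ and $A_n=A_{n-1}\wr\mathbb{Z}/p\mathbb{Z}$ for $n\ge1$. Then $\psi(A_n,B)\to 0$ as $n\to\infty$.
   Context: For a finite group $G$, the average order is $a(G)=\frac{1}{|G|}\sum_{g\in G}\mathrm{order}(g)$ and $m(G)$ denotes the maximum order of an element of $G$. For $p$-groups $A,B$, $\psi(A,B)=\frac{a(A\wr B)}{m(A)\,a(B)}$. For groups $A,B$, let $K=\prod_{b\in B}A$, on which $B$ acts by $x\cdot(\alpha_b)_b=(\alpha_{x^{-1}b})_b$ for $x\in B$; the wreath product $A\wr B$ is the semidirect product $K\rtimes B$ for this action. *)

theory Defs
  imports "HOL-Computational_Algebra.Primes" "HOL-Algebra.Multiplicative_Group" "HOL-Algebra.Elementary_Groups" Complex_Main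
begin

definition avg_order :: "('a, 'c) monoid_scheme \<Rightarrow> real" where
  "avg_order G = (\<Sum>g\<in>carrier G. real (group.ord G g)) / real (card (carrier G))"

definition max_order :: "('a, 'c) monoid_scheme \<Rightarrow> nat" where
  "max_order G = Max (group.ord G ` carrier G)"

text \<open>Wreath product A wr B = K \<rtimes> B with K = functions carrier B \<rightarrow> carrier A,
  B acting by (x . alpha)(b) = alpha (x^{-1} b). Product (k,x)(k',y) = (k (x.k'), x y).\<close>

definition wreath :: "('a, 'c) monoid_scheme \<Rightarrow> ('b, 'd) monoid_scheme \<Rightarrow> (('b \<Rightarrow> 'a) \<times> 'b) monoid" where
  "wreath A B = \<lparr> carrier = {(f, x). f \<in> carrier B \<rightarrow>\<^sub>E carrier A \<and> x \<in> carrier B},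
     mult = (\<lambda>(f, x) (g, y). (\<lambda>c\<in>carrier B. f c \<otimes>\<^bsub>A\<^esub> g (inv\<^bsub>B\<^esub> x \<otimes>\<^bsub>B\<^esub> c), x \<otimes>\<^bsub>B\<^esub> y)),
     one = (\<lambda>c\<in>carrier B. \<one>\<^bsub>A\<^esub>, \<one>\<^bsub>B\<^esub>) \<rparr>"

definition psi :: "('a, 'c) monoid_scheme \<Rightarrow> ('b, 'd) monoid_scheme \<Rightarrow> real" where
  "psi A B = avg_order (wreath A B) / (real (max_order A) * avg_order B)"

text \<open>Transport of a group structure along an injective map (an isomorphic copy).
  Used to give all iterated wreath products A_n a common element type.\<close>

definition transport :: "('x \<Rightarrow> 'y) \<Rightarrow> ('x, 'c) monoid_scheme \<Rightarrow> 'y monoid" where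
  "transport h G = \<lparr> carrier = h ` carrier G,
     mult = (\<lambda>u v. h (the_inv_into (carrier G) h u \<otimes>\<^bsub>G\<^esub> the_inv_into (carrier G) h v)),
     one = h \<one>\<^bsub>G\<^esub> \<rparr>"

datatype 'a itwr = Base 'a | Node "int \<Rightarrow> 'a itwr" int

fun iter_wreath :: "('a, 'c) monoid_scheme \<Rightarrow> nat \<Rightarrow> nat \<Rightarrow> 'a itwr monoid" where
  "iter_wreath A p 0 = transport Base A"
| "iter_wreath A p (Suc n) =
     transport (\<lambda>(f, k). Node f k) (wreath (iter_wreath A p n) (integer_mod_group p))"

end

theory Submission
  imports Defs
begin



lemma wreath_carrier: "carrier (wreath A B) = (carrier B \<rightarrow>\<^sub>E carrier A) \<times> carrier B"
  by (auto simp: wreath_def)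

lemma wreath_mult: "(f, x) \<otimes>\<^bsub>wreath A B\<^esub> (g, y) =
   (\<lambda>c\<in>carrier B. f c \<otimes>\<^bsub>A\<^esub> g (inv\<^bsub>B\<^esub> x \<otimes>\<^bsub>B\<^esub> c), x \<otimes>\<^bsub>B\<^esub> y)"
  by (simp add: wreath_def)

lemma wreath_one: "\<one>\<^bsub>wreath A B\<^esub> = (\<lambda>c\<in>carrier B. \<one>\<^bsub>A\<^esub>, \<one>\<^bsub>B\<^esub>)"
  by (simp add: wreath_def)

lemma wreath_group:
  assumes A: "group A" and B: "group B"
  shows "group (wreath A B)"
proof -
  interpret A: group A by (rule A)
  interpret B: group B by (rule B)
  show ?thesis
  proof (rule groupI)
    fix u v assume "u \<in> carrier (wreath A B)" "v \<in> carrier (wreath A B)"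
    then show "u \<otimes>\<^bsub>wreath A B\<^esub> v \<in> carrier (wreath A B)"
      by (cases u, cases v) (auto simp: wreath_carrier wreath_mult PiE_iff)
  next
    show "\<one>\<^bsub>wreath A B\<^esub> \<in> carrier (wreath A B)"
      by (auto simp: wreath_carrier wreath_one)
  next
    fix u v w assume "u \<in> carrier (wreath A B)" "v \<in> carrier (wreath A B)" "w \<in> carrier (wreath A B)"
    then show "u \<otimes>\<^bsub>wreath A B\<^esub> v \<otimes>\<^bsub>wreath A B\<^esub> w = u \<otimes>\<^bsub>wreath A B\<^esub> (v \<otimes>\<^bsub>wreath A B\<^esub> w)"
      by (cases u, cases v, cases w) (auto simp: wreath_carrier wreath_mult PiE_iff
          A.m_assoc B.m_assoc B.inv_mult_group intro!: ext)
  next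
    fix u assume "u \<in> carrier (wreath A B)"
    then show "\<one>\<^bsub>wreath A B\<^esub> \<otimes>\<^bsub>wreath A B\<^esub> u = u"
      by (cases u) (auto simp: wreath_carrier wreath_mult wreath_one PiE_iff extensional_def intro!: ext)
  next
    fix u assume u: "u \<in> carrier (wreath A B)"
    obtain f x where fx: "u = (f, x)" by (cases u)
    let ?v = "(\<lambda>c\<in>carrier B. inv\<^bsub>A\<^esub> f (x \<otimes>\<^bsub>B\<^esub> c), inv\<^bsub>B\<^esub> x)"
    have "?v \<in> carrier (wreath A B)" "?v \<otimes>\<^bsub>wreath A B\<^esub> u = \<one>\<^bsub>wreath A B\<^esub>"
      using u by (auto simp: fx wreath_carrier wreath_mult wreath_one PiE_iff B.m_assoc[symmetric] intro!: ext)
    then show "\<exists>v\<in>carrier (wreath A B). v \<otimes>\<^bsub>wreath A B\<^esub> u = \<one>\<^bsub>wreath A B\<^esub>" by blast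
  qed
qed

lemma transport_carrier: "carrier (transport h G) = h ` carrier G"
  by (simp add: transport_def)

lemma transport_mult:
  assumes "inj_on h (carrier G)" "a \<in> carrier G" "b \<in> carrier G"
  shows "h a \<otimes>\<^bsub>transport h G\<^esub> h b = h (a \<otimes>\<^bsub>G\<^esub> b)"
  using assms by (simp add: transport_def the_inv_into_f_f)

lemma transport_one: "\<one>\<^bsub>transport h G\<^esub> = h \<one>\<^bsub>G\<^esub>"
  by (simp add: transport_def)

lemma transport_group:
  assumes G: "group G" and h: "inj_on h (carrier G)"
  shows "group (transport h G)"
proof -
  interpret G: group G by (rule G)
  show ?thesis
  proof (rule groupI)
    fix u v assume "u \<in> carrier (transport h G)" "v \<in> carrier (transport h G)"
    then show "u \<otimes>\<^bsub>transport h G\<^esub> v \<in> carrier (transport h G)"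
      using h by (auto simp: transport_carrier transport_mult)
  next
    show "\<one>\<^bsub>transport h G\<^esub> \<in> carrier (transport h G)"
      by (auto simp: transport_carrier transport_one)
  next
    fix u v w assume "u \<in> carrier (transport h G)" "v \<in> carrier (transport h G)" "w \<in> carrier (transport h G)"
    then show "u \<otimes>\<^bsub>transport h G\<^esub> v \<otimes>\<^bsub>transport h G\<^esub> w = u \<otimes>\<^bsub>transport h G\<^esub> (v \<otimes>\<^bsub>transport h G\<^esub> w)"
      using h by (auto simp: transport_carrier transport_mult G.m_assoc)
  next
    fix u assume "u \<in> carrier (transport h G)"
    then show "\<one>\<^bsub>transport h G\<^esub> \<otimes>\<^bsub>transport h G\<^esub> u = u"
      using h by (auto simp: transport_carrier transport_mult transport_one)
  next
    fix u assume "u \<in> carrier (transport h G)"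
    then obtain a where a: "a \<in> carrier G" "u = h a" by (auto simp: transport_carrier)
    then have "h (inv\<^bsub>G\<^esub> a) \<in> carrier (transport h G)" "h (inv\<^bsub>G\<^esub> a) \<otimes>\<^bsub>transport h G\<^esub> u = \<one>\<^bsub>transport h G\<^esub>"
      using h by (auto simp: transport_carrier transport_mult transport_one)
    then show "\<exists>v\<in>carrier (transport h G). v \<otimes>\<^bsub>transport h G\<^esub> u = \<one>\<^bsub>transport h G\<^esub>" by blast
  qed
qed

lemma transport_pow:
  assumes G: "group G" and h: "inj_on h (carrier G)" and a: "a \<in> carrier G"
  shows "h a [^]\<^bsub>transport h G\<^esub> (n::nat) = h (a [^]\<^bsub>G\<^esub> n)"
proof -
  interpret G: group G by (rule G)
  show ?thesis
    by (induction n) (auto simp: transport_one transport_mult h a)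
qed

lemma transport_ord:
  assumes G: "group G" and h: "inj_on h (carrier G)" and a: "a \<in> carrier G"
  shows "group.ord (transport h G) (h a) = group.ord G a"
proof -
  interpret G: group G by (rule G)
  interpret T: group "transport h G" by (rule transport_group[OF G h])
  have ha: "h a \<in> carrier (transport h G)" using a by (simp add: transport_carrier)
  have "\<And>n. h a [^]\<^bsub>transport h G\<^esub> (n::nat) = \<one>\<^bsub>transport h G\<^esub> \<longleftrightarrow> a [^]\<^bsub>G\<^esub> n = \<one>\<^bsub>G\<^esub>"
    using transport_pow[OF G h a] h a by (simp add: transport_one inj_on_eq_iff)
  then show ?thesis
    using T.ord_unique[OF ha] G.pow_eq_id[OF a] by simp
qed

lemma transport_sum_ord:
  assumes G: "group G" and h: "inj_on h (carrier G)"
  shows "(\<Sum>u\<in>carrier (transport h G). \<phi> (group.ord (transport h G) u)) = (\<Sum>a\<in>carrier G. \<phi> (group.ord G a))"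
  by (simp add: transport_carrier sum.reindex[OF h] transport_ord[OF G h])

lemma transport_card: "inj_on h (carrier G) \<Longrightarrow> card (carrier (transport h G)) = card (carrier G)"
  by (simp add: transport_carrier card_image)

lemma transport_max_order:
  assumes G: "group G" and h: "inj_on h (carrier G)"
  shows "max_order (transport h G) = max_order G"
proof -
  have "group.ord (transport h G) ` carrier (transport h G) = group.ord G ` carrier G"
    by (force simp: transport_carrier transport_ord[OF G h] image_image)
  then show ?thesis by (simp add: max_order_def)
qed

primrec fpow :: "('a,'c) monoid_scheme \<Rightarrow> ('b,'d) monoid_scheme \<Rightarrow> ('b \<Rightarrow> 'a) \<Rightarrow> 'b \<Rightarrow> nat \<Rightarrow> 'b \<Rightarrow> 'a" where
  "fpow A B f x 0 = (\<lambda>c\<in>carrier B. \<one>\<^bsub>A\<^esub>)"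
| "fpow A B f x (Suc n) = (\<lambda>c\<in>carrier B. fpow A B f x n c \<otimes>\<^bsub>A\<^esub> f (inv\<^bsub>B\<^esub> (x [^]\<^bsub>B\<^esub> n) \<otimes>\<^bsub>B\<^esub> c))"

lemma fpow_closed:
  assumes A: "group A" and B: "group B" and f: "f \<in> carrier B \<rightarrow>\<^sub>E carrier A" and x: "x \<in> carrier B"
  shows "fpow A B f x n \<in> carrier B \<rightarrow>\<^sub>E carrier A"
proof -
  interpret A: group A by (rule A)
  interpret B: group B by (rule B)
  show ?thesis
    by (induction n) (use f x in \<open>auto simp: PiE_iff extensional_def\<close>)
qed

lemma wreath_pow:
  assumes A: "group A" and B: "group B" and f: "f \<in> carrier B \<rightarrow>\<^sub>E carrier A" and x: "x \<in> carrier B"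
  shows "(f, x) [^]\<^bsub>wreath A B\<^esub> (n::nat) = (fpow A B f x n, x [^]\<^bsub>B\<^esub> n)"
proof (induction n)
  case 0
  then show ?case by (simp add: wreath_one restrict_def)
next
  case (Suc n)
  then show ?case by (simp add: wreath_mult restrict_def)
qed

lemma fpow_Suc2:
  assumes A: "group A" and B: "group B" and f: "f \<in> carrier B \<rightarrow>\<^sub>E carrier A" and x: "x \<in> carrier B"
    and c: "c \<in> carrier B"
  shows "fpow A B f x (Suc n) c = f c \<otimes>\<^bsub>A\<^esub> fpow A B f x n (inv\<^bsub>B\<^esub> x \<otimes>\<^bsub>B\<^esub> c)"
  using c
proof (induction n arbitrary: c)
  case 0
  interpret A: group A by (rule A)
  interpret B: group B by (rule B)
  show ?case using 0 f x by (auto simp: PiE_iff)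
next
  case (Suc n)
  interpret A: group A by (rule A)
  interpret B: group B by (rule B)
  have cl: "\<And>m d. d \<in> carrier B \<Longrightarrow> fpow A B f x m d \<in> carrier A"
    using fpow_closed[OF A B f x] by (auto simp: PiE_iff)
  have cm: "inv\<^bsub>B\<^esub> x \<otimes>\<^bsub>B\<^esub> inv\<^bsub>B\<^esub> (x [^]\<^bsub>B\<^esub> n) = inv\<^bsub>B\<^esub> (x [^]\<^bsub>B\<^esub> n) \<otimes>\<^bsub>B\<^esub> inv\<^bsub>B\<^esub> x"
    using x by (metis B.inv_mult_group B.nat_pow_Suc2 B.nat_pow_closed nat_pow_Suc)
  have e: "inv\<^bsub>B\<^esub> (x [^]\<^bsub>B\<^esub> Suc n) \<otimes>\<^bsub>B\<^esub> c = inv\<^bsub>B\<^esub> (x [^]\<^bsub>B\<^esub> n) \<otimes>\<^bsub>B\<^esub> (inv\<^bsub>B\<^esub> x \<otimes>\<^bsub>B\<^esub> c)"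
    using x Suc.prems cm by (simp add: B.nat_pow_Suc2 B.inv_mult_group B.m_assoc[symmetric] del: nat_pow_Suc)
  have "fpow A B f x (Suc (Suc n)) c = fpow A B f x (Suc n) c \<otimes>\<^bsub>A\<^esub> f (inv\<^bsub>B\<^esub> (x [^]\<^bsub>B\<^esub> Suc n) \<otimes>\<^bsub>B\<^esub> c)"
    using Suc.prems by (simp del: nat_pow_Suc fpow.simps add: fpow.simps(2)[of A B f x "Suc n"])
  also have "\<dots> = f c \<otimes>\<^bsub>A\<^esub> (fpow A B f x n (inv\<^bsub>B\<^esub> x \<otimes>\<^bsub>B\<^esub> c) \<otimes>\<^bsub>A\<^esub> f (inv\<^bsub>B\<^esub> (x [^]\<^bsub>B\<^esub> n) \<otimes>\<^bsub>B\<^esub> (inv\<^bsub>B\<^esub> x \<otimes>\<^bsub>B\<^esub> c)))"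
    using Suc.IH[OF Suc.prems] e f x Suc.prems cl by (simp add: A.m_assoc PiE_iff)
  also have "\<dots> = f c \<otimes>\<^bsub>A\<^esub> fpow A B f x (Suc n) (inv\<^bsub>B\<^esub> x \<otimes>\<^bsub>B\<^esub> c)"
    using x Suc.prems by simp
  finally show ?case .
qed

lemma fpow_one:
  assumes A: "group A" and B: "group B" and f: "f \<in> carrier B \<rightarrow>\<^sub>E carrier A" and c: "c \<in> carrier B"
  shows "fpow A B f \<one>\<^bsub>B\<^esub> n c = f c [^]\<^bsub>A\<^esub> n"
proof -
  interpret A: group A by (rule A)
  interpret B: group B by (rule B)
  show ?thesis by (induction n) (use c in auto)
qed

lemma conj_pow:
  assumes G: "group G" and g: "g \<in> carrier G" and y: "y \<in> carrier G"
  shows "(inv\<^bsub>G\<^esub> g \<otimes>\<^bsub>G\<^esub> y \<otimes>\<^bsub>G\<^esub> g) [^]\<^bsub>G\<^esub> (n::nat) = inv\<^bsub>G\<^esub> g \<otimes>\<^bsub>G\<^esub> y [^]\<^bsub>G\<^esub> n \<otimes>\<^bsub>G\<^esub> g"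
proof -
  interpret G: group G by (rule G)
  show ?thesis
  proof (induction n)
    case 0
    then show ?case using g by simp
  next
    case (Suc n)
    have can: "\<And>a. a \<in> carrier G \<Longrightarrow> a \<otimes>\<^bsub>G\<^esub> g \<otimes>\<^bsub>G\<^esub> inv\<^bsub>G\<^esub> g = a"
      using g by (simp add: G.m_assoc)
    show ?case using Suc g y by (simp add: G.m_assoc[symmetric] can)
  qed
qed

lemma conj_eq_one:
  assumes G: "group G" and g: "g \<in> carrier G" and z: "z \<in> carrier G"
  shows "inv\<^bsub>G\<^esub> g \<otimes>\<^bsub>G\<^esub> z \<otimes>\<^bsub>G\<^esub> g = \<one>\<^bsub>G\<^esub> \<longleftrightarrow> z = \<one>\<^bsub>G\<^esub>"
proof
  interpret G: group G by (rule G)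
  have h1: "\<And>a. a \<in> carrier G \<Longrightarrow> g \<otimes>\<^bsub>G\<^esub> (inv\<^bsub>G\<^esub> g \<otimes>\<^bsub>G\<^esub> a) = a"
    using g by (simp add: G.m_assoc[symmetric])
  assume h: "inv\<^bsub>G\<^esub> g \<otimes>\<^bsub>G\<^esub> z \<otimes>\<^bsub>G\<^esub> g = \<one>\<^bsub>G\<^esub>"
  have "z = g \<otimes>\<^bsub>G\<^esub> (inv\<^bsub>G\<^esub> g \<otimes>\<^bsub>G\<^esub> z \<otimes>\<^bsub>G\<^esub> g) \<otimes>\<^bsub>G\<^esub> inv\<^bsub>G\<^esub> g"
    using g z by (simp add: G.m_assoc h1)
  also have "\<dots> = \<one>\<^bsub>G\<^esub>" using h g by simp
  finally show "z = \<one>\<^bsub>G\<^esub>" .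
next
  interpret G: group G by (rule G)
  assume "z = \<one>\<^bsub>G\<^esub>"
  then show "inv\<^bsub>G\<^esub> g \<otimes>\<^bsub>G\<^esub> z \<otimes>\<^bsub>G\<^esub> g = \<one>\<^bsub>G\<^esub>" using g by simp
qed

lemma ord_conj:
  assumes G: "group G" and g: "g \<in> carrier G" and y: "y \<in> carrier G"
  shows "group.ord G (inv\<^bsub>G\<^esub> g \<otimes>\<^bsub>G\<^esub> y \<otimes>\<^bsub>G\<^esub> g) = group.ord G y"
proof -
  interpret G: group G by (rule G)
  have *: "\<And>n. (inv\<^bsub>G\<^esub> g \<otimes>\<^bsub>G\<^esub> y \<otimes>\<^bsub>G\<^esub> g) [^]\<^bsub>G\<^esub> (n::nat) = \<one>\<^bsub>G\<^esub> \<longleftrightarrow> y [^]\<^bsub>G\<^esub> n = \<one>\<^bsub>G\<^esub>"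
  proof -
    fix n :: nat
    have "inv\<^bsub>G\<^esub> g \<otimes>\<^bsub>G\<^esub> y [^]\<^bsub>G\<^esub> n \<otimes>\<^bsub>G\<^esub> g = \<one>\<^bsub>G\<^esub> \<longleftrightarrow> y [^]\<^bsub>G\<^esub> n = \<one>\<^bsub>G\<^esub>"
      using conj_eq_one[OF G g, of "y [^]\<^bsub>G\<^esub> n"] y by simp
    then show "?thesis n" using conj_pow[OF G g y] by simp
  qed
  show ?thesis
    using G.ord_unique[of "inv\<^bsub>G\<^esub> g \<otimes>\<^bsub>G\<^esub> y \<otimes>\<^bsub>G\<^esub> g"] g y * G.pow_eq_id[OF y] by simp
qed

lemma ord_swap:
  assumes G: "group G" and u: "u \<in> carrier G" and v: "v \<in> carrier G"
  shows "group.ord G (u \<otimes>\<^bsub>G\<^esub> v) = group.ord G (v \<otimes>\<^bsub>G\<^esub> u)"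
proof -
  interpret G: group G by (rule G)
  have "v \<otimes>\<^bsub>G\<^esub> u = inv\<^bsub>G\<^esub> u \<otimes>\<^bsub>G\<^esub> (u \<otimes>\<^bsub>G\<^esub> v) \<otimes>\<^bsub>G\<^esub> u"
    using u v by (simp add: G.m_assoc[symmetric])
  then show ?thesis using ord_conj[OF G u, of "u \<otimes>\<^bsub>G\<^esub> v"] u v by simp
qed




lemma wreath_ord_bound:
  assumes A: "group A" and finA: "finite (carrier A)"
    and pp: "\<forall>a\<in>carrier A. \<forall>b\<in>carrier A. group.ord A a \<le> group.ord A b \<longrightarrow> group.ord A a dvd group.ord A b"
    and B: "group B" and finB: "finite (carrier B)"
    and f: "f \<in> carrier B \<rightarrow>\<^sub>E carrier A" and x: "x \<in> carrier B"
  shows "group.ord (wreath A B) (f, x) \<le> (\<Sum>c\<in>carrier B. group.ord A (fpow A B f x (group.ord B x) c))"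
    and "(group.ord (wreath A B) (f, x))^2 \<le> group.ord B x * (\<Sum>c\<in>carrier B. (group.ord A (fpow A B f x (group.ord B x) c))^2)"
proof -
  interpret A: group A by (rule A)
  interpret B: group B by (rule B)
  interpret W: group "wreath A B" by (rule wreath_group[OF A B])
  define r where "r = B.ord x"
  define F where "F = fpow A B f x r"
  have r1: "r \<ge> 1" unfolding r_def by (rule B.ord_ge_1[OF finB x])
  have FK: "F \<in> carrier B \<rightarrow>\<^sub>E carrier A" unfolding F_def by (rule fpow_closed[OF A B f x])
  have Fc: "\<And>c. c \<in> carrier B \<Longrightarrow> F c \<in> carrier A" using FK by auto
  have fc: "\<And>c. c \<in> carrier B \<Longrightarrow> f c \<in> carrier A" using f by auto
  have cl: "\<And>m d. d \<in> carrier B \<Longrightarrow> fpow A B f x m d \<in> carrier A"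
    using fpow_closed[OF A B f x] by (auto simp: PiE_iff)
  obtain q where rq: "r = Suc q" using r1 by (cases r) auto
  have xr: "x [^]\<^bsub>B\<^esub> r = \<one>\<^bsub>B\<^esub>" unfolding r_def using x by simp
  have invq: "inv\<^bsub>B\<^esub> (x [^]\<^bsub>B\<^esub> q) = x"
  proof (rule B.inv_equality)
    have "x \<otimes>\<^bsub>B\<^esub> x [^]\<^bsub>B\<^esub> q = x [^]\<^bsub>B\<^esub> Suc q" by (rule B.nat_pow_Suc2[OF x, symmetric])
    then show "x \<otimes>\<^bsub>B\<^esub> x [^]\<^bsub>B\<^esub> q = \<one>\<^bsub>B\<^esub>" using xr rq by simp
  qed (use x in auto)
  have conj1: "B.ord x = r" by (simp add: r_def)
  have step: "A.ord (F (x \<otimes>\<^bsub>B\<^esub> c)) = A.ord (F c)" if c: "c \<in> carrier B" for c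
  proof -
    have "F (x \<otimes>\<^bsub>B\<^esub> c) = f (x \<otimes>\<^bsub>B\<^esub> c) \<otimes>\<^bsub>A\<^esub> fpow A B f x q c"
      unfolding F_def rq using fpow_Suc2[OF A B f x, of "x \<otimes>\<^bsub>B\<^esub> c" q] c x
      by (simp add: B.m_assoc[symmetric])
    moreover have "F c = fpow A B f x q c \<otimes>\<^bsub>A\<^esub> f (x \<otimes>\<^bsub>B\<^esub> c)"
      unfolding F_def rq using c invq by simp
    ultimately show ?thesis using ord_swap[OF A] fc cl c x by simp
  qed
  have iter: "A.ord (F (x [^]\<^bsub>B\<^esub> i \<otimes>\<^bsub>B\<^esub> c)) = A.ord (F c)" if c: "c \<in> carrier B" for c and i :: nat
  proof (induction i)
    case 0
    then show ?case using c by simp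
  next
    case (Suc i)
    have "x [^]\<^bsub>B\<^esub> Suc i \<otimes>\<^bsub>B\<^esub> c = x \<otimes>\<^bsub>B\<^esub> (x [^]\<^bsub>B\<^esub> i \<otimes>\<^bsub>B\<^esub> c)"
      using x c by (simp only: B.nat_pow_Suc2[OF x]) (simp add: B.m_assoc)
    then show ?case using step[of "x [^]\<^bsub>B\<^esub> i \<otimes>\<^bsub>B\<^esub> c"] Suc x c by simp
  qed
  define M where "M = Max ((\<lambda>c. A.ord (F c)) ` carrier B)"
  have Bne: "carrier B \<noteq> {}" using B.one_closed by blast
  obtain c0 where c0: "c0 \<in> carrier B" "A.ord (F c0) = M"
  proof -
    have "M \<in> (\<lambda>c. A.ord (F c)) ` carrier B"
      unfolding M_def using finB Bne by (intro Max_in) auto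
    then show ?thesis using that by auto
  qed
  have leM: "\<And>c. c \<in> carrier B \<Longrightarrow> A.ord (F c) \<le> M"
    unfolding M_def using finB by auto
  have M1: "M \<ge> 1" using A.ord_ge_1[OF finA Fc[OF c0(1)]] c0 by simp
  define Orb where "Orb = (\<lambda>i. x [^]\<^bsub>B\<^esub> i \<otimes>\<^bsub>B\<^esub> c0) ` {0..<r}"
  have Osub: "Orb \<subseteq> carrier B" unfolding Orb_def using x c0 by auto
  have Oinj: "inj_on (\<lambda>i. x [^]\<^bsub>B\<^esub> i \<otimes>\<^bsub>B\<^esub> c0) {0..<r}"
  proof (rule inj_onI)
    fix i j assume i: "i \<in> {0..<r}" and j: "j \<in> {0..<r}" and e: "x [^]\<^bsub>B\<^esub> i \<otimes>\<^bsub>B\<^esub> c0 = x [^]\<^bsub>B\<^esub> j \<otimes>\<^bsub>B\<^esub> c0"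
    then have "x [^]\<^bsub>B\<^esub> i = x [^]\<^bsub>B\<^esub> j" using x c0 by simp
    moreover have "inj_on (\<lambda>k. x [^]\<^bsub>B\<^esub> k) {0..B.ord x - 1}" by (rule B.ord_inj[OF x])
    ultimately show "i = j" using i j r1 unfolding r_def by (auto simp: inj_on_def)
  qed
  have orbsum: "(\<Sum>c\<in>carrier B. g (A.ord (F c))) \<ge> r * g M" if g0: "\<And>n. g n \<ge> (0::nat)" for g :: "nat \<Rightarrow> nat"
  proof -
    have "(\<Sum>c\<in>Orb. g (A.ord (F c))) = (\<Sum>i\<in>{0..<r}. g (A.ord (F (x [^]\<^bsub>B\<^esub> i \<otimes>\<^bsub>B\<^esub> c0))))"
      unfolding Orb_def by (rule sum.reindex[OF Oinj, unfolded comp_def])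
    also have "\<dots> = r * g M" using iter[OF c0(1)] c0 by simp
    finally have "(\<Sum>c\<in>Orb. g (A.ord (F c))) = r * g M" .
    moreover have "(\<Sum>c\<in>Orb. g (A.ord (F c))) \<le> (\<Sum>c\<in>carrier B. g (A.ord (F c)))"
      by (rule sum_mono2[OF finB Osub]) simp
    ultimately show ?thesis by simp
  qed
  have pw: "(f, x) [^]\<^bsub>wreath A B\<^esub> (r * M) = \<one>\<^bsub>wreath A B\<^esub>"
  proof -
    have fxW: "(f, x) \<in> carrier (wreath A B)" using f x by (simp add: wreath_carrier)
    have "(f, x) [^]\<^bsub>wreath A B\<^esub> (r * M) = ((f, x) [^]\<^bsub>wreath A B\<^esub> r) [^]\<^bsub>wreath A B\<^esub> M"
      using fxW by (simp add: W.nat_pow_pow)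
    also have "(f, x) [^]\<^bsub>wreath A B\<^esub> r = (F, \<one>\<^bsub>B\<^esub>)"
      using wreath_pow[OF A B f x] xr by (simp add: F_def)
    also have "(F, \<one>\<^bsub>B\<^esub>) [^]\<^bsub>wreath A B\<^esub> M = (fpow A B F \<one>\<^bsub>B\<^esub> M, \<one>\<^bsub>B\<^esub>)"
      using wreath_pow[OF A B FK B.one_closed] by simp
    also have "fpow A B F \<one>\<^bsub>B\<^esub> M = (\<lambda>c\<in>carrier B. \<one>\<^bsub>A\<^esub>)"
    proof (rule PiE_ext)
      show "fpow A B F \<one>\<^bsub>B\<^esub> M \<in> carrier B \<rightarrow>\<^sub>E carrier A" by (rule fpow_closed[OF A B FK B.one_closed])
      show "(\<lambda>c\<in>carrier B. \<one>\<^bsub>A\<^esub>) \<in> carrier B \<rightarrow>\<^sub>E carrier A" by auto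
      fix c assume c: "c \<in> carrier B"
      have "A.ord (F c) dvd M" using pp Fc[OF c] Fc[OF c0(1)] leM[OF c] c0 by auto
      then have "F c [^]\<^bsub>A\<^esub> M = \<one>\<^bsub>A\<^esub>" using A.pow_eq_id[OF Fc[OF c]] by simp
      then show "fpow A B F \<one>\<^bsub>B\<^esub> M c = (\<lambda>c\<in>carrier B. \<one>\<^bsub>A\<^esub>) c"
        using fpow_one[OF A B FK c] c by simp
    qed
    finally show ?thesis by (simp add: wreath_one restrict_def)
  qed
  have ordle: "W.ord (f, x) \<le> r * M"
  proof -
    have fxW: "(f, x) \<in> carrier (wreath A B)" using f x by (simp add: wreath_carrier)
    have "W.ord (f, x) dvd r * M" using W.pow_eq_id[OF fxW] pw by simp
    moreover have "r * M > 0" using r1 M1 by simp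
    ultimately show ?thesis by (rule dvd_imp_le)
  qed
  have s1: "r * M \<le> (\<Sum>c\<in>carrier B. A.ord (F c))" using orbsum[of "\<lambda>n. n"] by simp
  have s2: "r * M^2 \<le> (\<Sum>c\<in>carrier B. (A.ord (F c))^2)" using orbsum[of "\<lambda>n. n^2"] by simp
  show "W.ord (f, x) \<le> (\<Sum>c\<in>carrier B. A.ord (fpow A B f x (B.ord x) c))"
    using ordle s1 by (simp add: F_def r_def)
  have "(W.ord (f, x))^2 \<le> (r * M)^2" using ordle by (simp add: power_mono)
  also have "\<dots> = r * (r * M^2)" by (simp add: power2_eq_square)
  also have "\<dots> \<le> r * (\<Sum>c\<in>carrier B. (A.ord (F c))^2)" using s2 by simp
  finally show "(W.ord (f, x))^2 \<le> B.ord x * (\<Sum>c\<in>carrier B. (A.ord (fpow A B f x (B.ord x) c))^2)"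
    by (simp add: F_def r_def)
qed




lemma fpow_cong:
  assumes "c \<in> carrier B" and "\<And>i. i < n \<Longrightarrow> g (inv\<^bsub>B\<^esub> (x [^]\<^bsub>B\<^esub> i) \<otimes>\<^bsub>B\<^esub> c) = f (inv\<^bsub>B\<^esub> (x [^]\<^bsub>B\<^esub> i) \<otimes>\<^bsub>B\<^esub> c)"
  shows "fpow A B g x n c = fpow A B f x n c"
  using assms(2)
proof (induction n)
  case 0
  then show ?case by simp
next
  case (Suc n)
  then show ?case using assms(1) by simp
qed

lemma sum_fiber_PiE:
  fixes \<phi> :: "'a \<Rightarrow> nat"
  assumes finA: "finite SA" and finB: "finite SB" and c: "c \<in> SB"
  shows "(\<Sum>g\<in>SB \<rightarrow>\<^sub>E SA. \<phi> (g c)) = card SA ^ (card SB - 1) * (\<Sum>a\<in>SA. \<phi> a)"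
proof -
  have fK: "finite (SB \<rightarrow>\<^sub>E SA)" using finA finB by (simp add: finite_PiE)
  have "(\<Sum>g\<in>SB \<rightarrow>\<^sub>E SA. \<phi> (g c)) = (\<Sum>a\<in>SA. \<Sum>g\<in>{g. g \<in> SB \<rightarrow>\<^sub>E SA \<and> g c = a}. \<phi> (g c))"
    by (rule sum.group[symmetric, OF fK finA]) (use c in auto)
  also have "\<dots> = (\<Sum>a\<in>SA. \<phi> a * card SA ^ (card SB - 1))"
  proof (rule sum.cong[OF refl])
    fix a assume a: "a \<in> SA"
    have eq: "{g. g \<in> SB \<rightarrow>\<^sub>E SA \<and> g c = a} = (\<Pi>\<^sub>E i\<in>SB. if i = c then {a} else SA)"
      using a c by (auto simp: PiE_iff extensional_def split: if_splits)
    have "card {g. g \<in> SB \<rightarrow>\<^sub>E SA \<and> g c = a} = (\<Prod>i\<in>SB. card (if i = c then {a} else SA))"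
      unfolding eq by (rule card_PiE[OF finB])
    also have "\<dots> = card (if c = c then {a} else SA) * (\<Prod>i\<in>SB - {c}. card (if i = c then {a} else SA))"
      by (rule prod.remove[OF finB c])
    also have "\<dots> = card SA ^ (card SB - 1)"
      using finB c by (simp add: card_Diff_singleton)
    finally have cd: "card {g. g \<in> SB \<rightarrow>\<^sub>E SA \<and> g c = a} = card SA ^ (card SB - 1)" .
    have "(\<Sum>g\<in>{g. g \<in> SB \<rightarrow>\<^sub>E SA \<and> g c = a}. \<phi> (g c)) = (\<Sum>g\<in>{g. g \<in> SB \<rightarrow>\<^sub>E SA \<and> g c = a}. \<phi> a)"
      by (rule sum.cong) auto
    also have "\<dots> = \<phi> a * card SA ^ (card SB - 1)" using cd by simp
    finally show "(\<Sum>g\<in>{g. g \<in> SB \<rightarrow>\<^sub>E SA \<and> g c = a}. \<phi> (g c)) = \<phi> a * card SA ^ (card SB - 1)" .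
  qed
  also have "\<dots> = card SA ^ (card SB - 1) * (\<Sum>a\<in>SA. \<phi> a)"
    by (simp add: sum_distrib_right mult.commute)
  finally show ?thesis .
qed

lemma sum_fpow:
  fixes \<phi> :: "'a \<Rightarrow> nat"
  assumes A: "group A" and finA: "finite (carrier A)" and B: "group B" and finB: "finite (carrier B)"
    and x: "x \<in> carrier B" and c: "c \<in> carrier B"
  shows "(\<Sum>f\<in>carrier B \<rightarrow>\<^sub>E carrier A. \<phi> (fpow A B f x (group.ord B x) c))
         = card (carrier A) ^ (card (carrier B) - 1) * (\<Sum>a\<in>carrier A. \<phi> a)"
proof -
  interpret A: group A by (rule A)
  interpret B: group B by (rule B)
  define K where "K = carrier B \<rightarrow>\<^sub>E carrier A"
  define r where "r = B.ord x"
  have r1: "r \<ge> 1" unfolding r_def by (rule B.ord_ge_1[OF finB x])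
  obtain q where rq: "r = Suc q" using r1 by (cases r) auto
  define Q where "Q = (\<lambda>f. fpow A B f x q (inv\<^bsub>B\<^esub> x \<otimes>\<^bsub>B\<^esub> c))"
  have QA: "Q f \<in> carrier A" if "f \<in> K" for f
    using fpow_closed[OF A B _ x, of f q] that x c unfolding Q_def K_def by (auto simp: PiE_iff)
  have neq: "inv\<^bsub>B\<^esub> (x [^]\<^bsub>B\<^esub> i) \<otimes>\<^bsub>B\<^esub> (inv\<^bsub>B\<^esub> x \<otimes>\<^bsub>B\<^esub> c) \<noteq> c" if i: "i < q" for i
  proof
    assume e: "inv\<^bsub>B\<^esub> (x [^]\<^bsub>B\<^esub> i) \<otimes>\<^bsub>B\<^esub> (inv\<^bsub>B\<^esub> x \<otimes>\<^bsub>B\<^esub> c) = c"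
    have "inv\<^bsub>B\<^esub> (x [^]\<^bsub>B\<^esub> i) \<otimes>\<^bsub>B\<^esub> (inv\<^bsub>B\<^esub> x \<otimes>\<^bsub>B\<^esub> c) = inv\<^bsub>B\<^esub> (x \<otimes>\<^bsub>B\<^esub> x [^]\<^bsub>B\<^esub> i) \<otimes>\<^bsub>B\<^esub> c"
      using x c by (simp add: B.inv_mult_group B.m_assoc)
    also have "\<dots> = inv\<^bsub>B\<^esub> (x [^]\<^bsub>B\<^esub> Suc i) \<otimes>\<^bsub>B\<^esub> c"
      using B.nat_pow_Suc2[OF x, of i] by simp
    finally have "inv\<^bsub>B\<^esub> (x [^]\<^bsub>B\<^esub> Suc i) \<otimes>\<^bsub>B\<^esub> c = \<one>\<^bsub>B\<^esub> \<otimes>\<^bsub>B\<^esub> c" using e c by simp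
    then have "inv\<^bsub>B\<^esub> (x [^]\<^bsub>B\<^esub> Suc i) = \<one>\<^bsub>B\<^esub>" using c x by (simp del: nat_pow_Suc B.nat_pow_Suc)
    then have "x [^]\<^bsub>B\<^esub> Suc i = \<one>\<^bsub>B\<^esub>" using x
      by (metis B.inv_inv B.inv_one B.nat_pow_closed)
    then have "r dvd Suc i" unfolding r_def using B.pow_eq_id[OF x, of "Suc i"] by blast
    then show False using i rq by (simp add: nat_dvd_not_less)
  qed
  have Qupd: "Q (f(c := a)) = Q f" for f a
    unfolding Q_def
    by (rule fpow_cong) (use x c neq in auto)
  have main: "fpow A B f x r c = f c \<otimes>\<^bsub>A\<^esub> Q f" if "f \<in> K" for f
    unfolding rq Q_def using fpow_Suc2[OF A B _ x c, of f q] that K_def by simp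
  define \<Phi> where "\<Phi> = (\<lambda>f. f(c := f c \<otimes>\<^bsub>A\<^esub> Q f))"
  define \<Psi> where "\<Psi> = (\<lambda>f. f(c := f c \<otimes>\<^bsub>A\<^esub> inv\<^bsub>A\<^esub> Q f))"
  have bij: "bij_betw \<Phi> K K"
  proof (rule bij_betw_byWitness[where f' = \<Psi>])
    show "\<forall>f\<in>K. \<Psi> (\<Phi> f) = f"
    proof
      fix f assume f: "f \<in> K"
      have fc: "f c \<in> carrier A" using f c unfolding K_def by auto
      show "\<Psi> (\<Phi> f) = f" unfolding \<Psi>_def \<Phi>_def using Qupd fc QA[OF f]
        by (simp add: A.m_assoc)
    qed
    show "\<forall>f\<in>K. \<Phi> (\<Psi> f) = f"
    proof
      fix f assume f: "f \<in> K"
      have fc: "f c \<in> carrier A" using f c unfolding K_def by auto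
      show "\<Phi> (\<Psi> f) = f" unfolding \<Psi>_def \<Phi>_def using Qupd fc QA[OF f]
        by (simp add: A.m_assoc)
    qed
    show "\<Phi> ` K \<subseteq> K" unfolding \<Phi>_def K_def using c QA unfolding K_def by (auto simp: PiE_iff)
    show "\<Psi> ` K \<subseteq> K" unfolding \<Psi>_def K_def using c QA unfolding K_def by (auto simp: PiE_iff)
  qed
  have "(\<Sum>f\<in>K. \<phi> (fpow A B f x r c)) = (\<Sum>f\<in>K. \<phi> (\<Phi> f c))"
    by (rule sum.cong[OF refl]) (simp add: main \<Phi>_def)
  also have "\<dots> = (\<Sum>g\<in>K. \<phi> (g c))"
    by (rule sum.reindex_bij_betw[OF bij, where g = "\<lambda>g. \<phi> (g c)"])
  also have "\<dots> = card (carrier A) ^ (card (carrier B) - 1) * (\<Sum>a\<in>carrier A. \<phi> a)"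
    unfolding K_def by (rule sum_fiber_PiE[OF finA finB c])
  finally show ?thesis unfolding K_def r_def .
qed




lemma wreath_card:
  assumes "finite (carrier A)" "finite (carrier B)"
  shows "card (carrier (wreath A B)) = card (carrier A) ^ card (carrier B) * card (carrier B)"
  using assms by (simp add: wreath_carrier card_cartesian_product card_PiE)

lemma wreath_sums:
  assumes A: "group A" and finA: "finite (carrier A)"
    and pp: "\<forall>a\<in>carrier A. \<forall>b\<in>carrier A. group.ord A a \<le> group.ord A b \<longrightarrow> group.ord A a dvd group.ord A b"
    and B: "group B" and finB: "finite (carrier B)"
  shows "(\<Sum>u\<in>carrier (wreath A B). group.ord (wreath A B) u)
          \<le> card (carrier B) * card (carrier B) * card (carrier A) ^ (card (carrier B) - 1) * (\<Sum>a\<in>carrier A. group.ord A a)"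
    and "(\<Sum>u\<in>carrier (wreath A B). (group.ord (wreath A B) u)^2)
          \<le> (\<Sum>x\<in>carrier B. group.ord B x) * card (carrier B) * card (carrier A) ^ (card (carrier B) - 1) * (\<Sum>a\<in>carrier A. (group.ord A a)^2)"
proof -
  interpret A: group A by (rule A)
  interpret B: group B by (rule B)
  interpret W: group "wreath A B" by (rule wreath_group[OF A B])
  define K where "K = carrier B \<rightarrow>\<^sub>E carrier A"
  define C where "C = card (carrier A) ^ (card (carrier B) - 1)"
  have fK: "finite K" unfolding K_def using finA finB by (simp add: finite_PiE)
  have split: "(\<Sum>u\<in>carrier (wreath A B). g u) = (\<Sum>x\<in>carrier B. \<Sum>f\<in>K. g (f, x))" for g :: "_ \<Rightarrow> nat"
  proof -
    have "(\<Sum>u\<in>carrier (wreath A B). g u) = (\<Sum>f\<in>K. \<Sum>x\<in>carrier B. g (f, x))"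
      unfolding wreath_carrier K_def by (simp add: sum.cartesian_product)
    also have "\<dots> = (\<Sum>x\<in>carrier B. \<Sum>f\<in>K. g (f, x))" by (rule sum.swap)
    finally show ?thesis .
  qed
  have "(\<Sum>u\<in>carrier (wreath A B). W.ord u) = (\<Sum>x\<in>carrier B. \<Sum>f\<in>K. W.ord (f, x))" by (rule split)
  also have "\<dots> \<le> (\<Sum>x\<in>carrier B. \<Sum>f\<in>K. \<Sum>c\<in>carrier B. A.ord (fpow A B f x (B.ord x) c))"
    by (intro sum_mono wreath_ord_bound(1)[OF A finA pp B finB]) (auto simp: K_def)
  also have "\<dots> = (\<Sum>x\<in>carrier B. \<Sum>c\<in>carrier B. \<Sum>f\<in>K. A.ord (fpow A B f x (B.ord x) c))"
    by (simp add: sum.swap[where A = K])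
  also have "\<dots> = (\<Sum>x\<in>carrier B. \<Sum>c\<in>carrier B. C * (\<Sum>a\<in>carrier A. A.ord a))"
    unfolding K_def C_def by (intro sum.cong refl sum_fpow[OF A finA B finB])
  also have "\<dots> = card (carrier B) * card (carrier B) * C * (\<Sum>a\<in>carrier A. A.ord a)" by simp
  finally show "(\<Sum>u\<in>carrier (wreath A B). W.ord u)
          \<le> card (carrier B) * card (carrier B) * card (carrier A) ^ (card (carrier B) - 1) * (\<Sum>a\<in>carrier A. A.ord a)"
    by (simp add: C_def)
  have "(\<Sum>u\<in>carrier (wreath A B). (W.ord u)^2) = (\<Sum>x\<in>carrier B. \<Sum>f\<in>K. (W.ord (f, x))^2)" by (rule split)
  also have "\<dots> \<le> (\<Sum>x\<in>carrier B. \<Sum>f\<in>K. B.ord x * (\<Sum>c\<in>carrier B. (A.ord (fpow A B f x (B.ord x) c))^2))"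
    by (intro sum_mono wreath_ord_bound(2)[OF A finA pp B finB]) (auto simp: K_def)
  also have "\<dots> = (\<Sum>x\<in>carrier B. B.ord x * (\<Sum>c\<in>carrier B. \<Sum>f\<in>K. (A.ord (fpow A B f x (B.ord x) c))^2))"
    by (simp add: sum.swap[where A = K] sum_distrib_left)
  also have "\<dots> = (\<Sum>x\<in>carrier B. B.ord x * (\<Sum>c\<in>carrier B. C * (\<Sum>a\<in>carrier A. (A.ord a)^2)))"
    unfolding K_def C_def by (intro sum.cong refl arg_cong2[where f = "(*)"] sum_fpow[OF A finA B finB])
  also have "\<dots> = (\<Sum>x\<in>carrier B. B.ord x) * card (carrier B) * C * (\<Sum>a\<in>carrier A. (A.ord a)^2)"
    by (simp add: sum_distrib_right mult.assoc)
  finally show "(\<Sum>u\<in>carrier (wreath A B). (W.ord u)^2)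
          \<le> (\<Sum>x\<in>carrier B. B.ord x) * card (carrier B) * card (carrier A) ^ (card (carrier B) - 1) * (\<Sum>a\<in>carrier A. (A.ord a)^2)"
    by (simp add: C_def)
qed




lemma wreath_big_elem:
  assumes G: "group G" and finG: "finite (carrier G)" and p: "p \<ge> 2" and a: "a \<in> carrier G"
  shows "\<exists>u\<in>carrier (wreath G (integer_mod_group p)). group.ord (wreath G (integer_mod_group p)) u \<ge> p * group.ord G a"
proof -
  interpret G: group G by (rule G)
  let ?Z = "integer_mod_group p"
  interpret Z: group ?Z by simp
  interpret W: group "wreath G ?Z" by (rule wreath_group[OF G]) simp
  have cZ: "carrier ?Z = {0..<int p}" using p by (simp add: carrier_integer_mod_group)
  have finZ: "finite (carrier ?Z)" using cZ by simp
  define f where "f = (\<lambda>c\<in>carrier ?Z. if c = 0 then a else \<one>\<^bsub>G\<^esub>)"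
  have fK: "f \<in> carrier ?Z \<rightarrow>\<^sub>E carrier G" unfolding f_def using a by auto
  have one: "(1::int) \<in> carrier ?Z" using p by simp
  have F0: "fpow G ?Z f 1 n 0 = a" if "1 \<le> n" "n \<le> p" for n
    using that
  proof (induction n)
    case 0 then show ?case by simp
  next
    case (Suc n)
    show ?case
    proof (cases "n = 0")
      case True
      then show ?thesis using a p by (simp add: f_def cZ)
    next
      case False
      have IH: "fpow G ?Z f 1 n 0 = a" using Suc False by simp
      have nc: "int n mod int p \<in> carrier ?Z" using cZ p by simp
      have "inv\<^bsub>?Z\<^esub> (1 [^]\<^bsub>?Z\<^esub> n) \<otimes>\<^bsub>?Z\<^esub> 0 = (- (int n mod int p)) mod int p"
        using nc by simp
      also have "\<dots> = (- int n) mod int p" by (simp add: mod_minus_eq)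
      finally have e: "inv\<^bsub>?Z\<^esub> (1 [^]\<^bsub>?Z\<^esub> n) \<otimes>\<^bsub>?Z\<^esub> 0 = (- int n) mod int p" .
      have ne: "(- int n) mod int p \<noteq> 0"
      proof
        assume "(- int n) mod int p = 0"
        then have "int p dvd int n" by (simp add: mod_eq_0_iff_dvd)
        then have "p dvd n" by simp
        then show False using False Suc.prems by (simp add: nat_dvd_not_less)
      qed
      have inc: "(- int n) mod int p \<in> carrier ?Z" using cZ p by simp
      have fv: "f ((- int n) mod int p) = \<one>\<^bsub>G\<^esub>" using ne inc by (simp add: f_def)
      show ?thesis using IH e fv a by simp
    qed
  qed
  define k where "k = W.ord (f, 1)"
  have fxW: "(f, 1) \<in> carrier (wreath G ?Z)" using fK one by (simp add: wreath_carrier)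
  have finW: "finite (carrier (wreath G ?Z))" using finG finZ by (simp add: wreath_carrier finite_PiE)
  have k1: "k \<ge> 1" unfolding k_def by (rule W.ord_ge_1[OF finW fxW])
  have pk: "(f, 1) [^]\<^bsub>wreath G ?Z\<^esub> k = \<one>\<^bsub>wreath G ?Z\<^esub>" unfolding k_def using fxW by simp
  then have "1 [^]\<^bsub>?Z\<^esub> k = (0::int)" using wreath_pow[OF G Z.is_group fK one, of k] by (simp add: wreath_one)
  then have "int p dvd int k" by (simp add: mod_eq_0_iff_dvd)
  then have "p dvd k" by presburger
  then obtain j where kj: "k = p * j" by (auto simp: dvd_def)
  have j1: "j \<ge> 1" using k1 kj by (cases j) auto
  define F where "F = fpow G ?Z f 1 p"
  have FK: "F \<in> carrier ?Z \<rightarrow>\<^sub>E carrier G" unfolding F_def by (rule fpow_closed[OF G Z.is_group fK one])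
  have "(f, 1) [^]\<^bsub>wreath G ?Z\<^esub> k = ((f, 1) [^]\<^bsub>wreath G ?Z\<^esub> p) [^]\<^bsub>wreath G ?Z\<^esub> j"
    using fxW kj by (simp add: W.nat_pow_pow)
  also have "(f, 1) [^]\<^bsub>wreath G ?Z\<^esub> p = (F, 0)"
    using wreath_pow[OF G Z.is_group fK one, of p] by (simp add: F_def)
  also have "(F, 0) [^]\<^bsub>wreath G ?Z\<^esub> j = (fpow G ?Z F 0 j, 0)"
    using wreath_pow[OF G Z.is_group FK, of 0 j] by simp
  finally have "fpow G ?Z F 0 j = (\<lambda>c\<in>carrier ?Z. \<one>\<^bsub>G\<^esub>)" using pk by (simp add: wreath_one)
  then have "fpow G ?Z F 0 j 0 = \<one>\<^bsub>G\<^esub>" by (metis Z.one_closed one_integer_mod_group restrict_apply')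
  moreover have "fpow G ?Z F 0 j 0 = F 0 [^]\<^bsub>G\<^esub> j"
    using fpow_one[OF G Z.is_group FK, of 0 j] by simp
  moreover have "F 0 = a" unfolding F_def using F0[of p] p by simp
  ultimately have "a [^]\<^bsub>G\<^esub> j = \<one>\<^bsub>G\<^esub>" by simp
  then have "G.ord a dvd j" using G.pow_eq_id[OF a] by simp
  then have "G.ord a \<le> j" using j1 by (simp add: dvd_imp_le)
  then have "p * G.ord a \<le> k" using kj by simp
  then show ?thesis using fxW unfolding k_def by blast
qed




lemma pgroup_pp:
  assumes p: "prime p" and G: "group G" and fin: "finite (carrier G)" and k: "card (carrier G) = p ^ k"
  shows "\<forall>a\<in>carrier G. \<forall>b\<in>carrier G. group.ord G a \<le> group.ord G b \<longrightarrow> group.ord G a dvd group.ord G b"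
proof (intro ballI impI)
  interpret G: group G by (rule G)
  fix a b assume a: "a \<in> carrier G" and b: "b \<in> carrier G" and le: "G.ord a \<le> G.ord b"
  have "G.ord a dvd p ^ k" using G.ord_dvd_group_order[OF a] k by (simp add: order_def)
  then obtain i where i: "G.ord a = p ^ i" using divides_primepow_nat[OF p] by auto
  have "G.ord b dvd p ^ k" using G.ord_dvd_group_order[OF b] k by (simp add: order_def)
  then obtain j where j: "G.ord b = p ^ j" using divides_primepow_nat[OF p] by auto
  have "i \<le> j" using le i j power_le_imp_le_exp[of p i j] prime_gt_1_nat[OF p] by simp
  then show "G.ord a dvd G.ord b" using i j by (simp add: le_imp_power_dvd)
qed

lemma inj_Node: "inj_on (\<lambda>(f, k). Node f k) S"
  by (auto simp: inj_on_def)

lemma iter_props: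
  assumes p: "prime p" and A: "group A" and finA: "finite (carrier A)" and kA: "\<exists>k. card (carrier A) = p ^ k"
  shows "group (iter_wreath A p n) \<and> finite (carrier (iter_wreath A p n)) \<and> (\<exists>k. card (carrier (iter_wreath A p n)) = p ^ k)"
proof (induction n)
  case 0
  have i: "inj_on Base (carrier A)" by (auto simp: inj_on_def)
  show ?case using transport_group[OF A i] transport_card[OF i] finA kA by (simp add: transport_carrier)
next
  case (Suc n)
  let ?G = "iter_wreath A p n"
  let ?Z = "integer_mod_group p"
  from Suc obtain k where G: "group ?G" and fG: "finite (carrier ?G)" and k: "card (carrier ?G) = p ^ k" by auto
  have p0: "p \<noteq> 0" using p by auto
  have cZ: "card (carrier ?Z) = p" using p0 by (simp add: carrier_integer_mod_group)
  have fZ: "finite (carrier ?Z)" using p0 by (simp add: carrier_integer_mod_group)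
  have W: "group (wreath ?G ?Z)" by (rule wreath_group[OF G]) simp
  have fW: "finite (carrier (wreath ?G ?Z))" using fG fZ by (simp add: wreath_carrier finite_PiE)
  have "card (carrier (wreath ?G ?Z)) = p ^ (k * p + 1)"
    using wreath_card[OF fG fZ] k cZ by (simp add: power_mult)
  moreover have "card ((\<lambda>(x, y). Node x y) ` carrier (wreath ?G ?Z)) = card (carrier (wreath ?G ?Z))"
    by (rule card_image) (auto simp: inj_on_def)
  ultimately show ?case
    using transport_group[OF W inj_Node] fW by (simp add: transport_carrier) (metis power_Suc)
qed

lemma cauchy_sum:
  fixes x :: "'a \<Rightarrow> real"
  assumes "finite I"
  shows "(\<Sum>i\<in>I. x i)^2 \<le> real (card I) * (\<Sum>i\<in>I. (x i)^2)"
proof (cases "I = {}")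
  case True then show ?thesis by simp
next
  case False
  define n where "n = real (card I)"
  have n: "n > 0" using False assms by (simp add: n_def card_gt_0_iff)
  define s where "s = (\<Sum>i\<in>I. x i)"
  define q where "q = (\<Sum>i\<in>I. (x i)^2)"
  define mu where "mu = s / n"
  have "0 \<le> (\<Sum>i\<in>I. (x i - mu)^2)" by (simp add: sum_nonneg)
  also have "\<dots> = (\<Sum>i\<in>I. (x i)^2 - 2 * mu * x i + mu^2)"
    by (simp add: power2_diff algebra_simps)
  also have "\<dots> = q - 2 * mu * s + n * mu^2"
    by (simp add: sum.distrib sum_subtractf sum_distrib_left[symmetric] q_def s_def n_def)
  also have "\<dots> = q - s^2 / n" using n by (simp add: mu_def field_simps power2_eq_square)
  finally have "s^2 / n \<le> q" by simp
  then have "s^2 \<le> n * q" using n by (simp add: field_simps)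
  then show ?thesis by (simp add: s_def q_def n_def)
qed




lemma max_order_props:
  assumes G: "group G" and fin: "finite (carrier G)"
  shows "\<And>g. g \<in> carrier G \<Longrightarrow> group.ord G g \<le> max_order G"
    and "\<exists>g\<in>carrier G. group.ord G g = max_order G"
    and "max_order G \<ge> 1"
proof -
  interpret G: group G by (rule G)
  have ne: "carrier G \<noteq> {}" using G.one_closed by blast
  show le: "\<And>g. g \<in> carrier G \<Longrightarrow> G.ord g \<le> max_order G"
    unfolding max_order_def using fin by auto
  have "max_order G \<in> G.ord ` carrier G" unfolding max_order_def using fin ne by (intro Max_in) auto
  then show "\<exists>g\<in>carrier G. G.ord g = max_order G" by auto
  show "max_order G \<ge> 1" using le[OF G.one_closed] by simp
qed

lemma sum_ord_Zp:
  assumes p: "p \<ge> 1"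
  shows "(\<Sum>x\<in>carrier (integer_mod_group p). group.ord (integer_mod_group p) x) \<le> 1 + (p - 1) * p"
proof -
  let ?Z = "integer_mod_group p"
  interpret Z: group ?Z by simp
  have cZ: "carrier ?Z = {0..<int p}" using p by (simp add: carrier_integer_mod_group)
  have fZ: "finite (carrier ?Z)" using cZ by simp
  have cardZ: "card (carrier ?Z) = p" using cZ by simp
  have "(\<Sum>x\<in>carrier ?Z. Z.ord x) = Z.ord 0 + (\<Sum>x\<in>carrier ?Z - {0}. Z.ord x)"
    by (rule sum.remove[OF fZ]) simp
  also have "Z.ord 0 = 1" using Z.ord_id by simp
  also have "(\<Sum>x\<in>carrier ?Z - {0}. Z.ord x) \<le> (\<Sum>x\<in>carrier ?Z - {0}. p)"
  proof (rule sum_mono)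
    fix x assume "x \<in> carrier ?Z - {0}"
    then show "Z.ord x \<le> p" using Z.ord_le_group_order[OF fZ, of x] cardZ by (simp add: order_def)
  qed
  also have "(\<Sum>x\<in>carrier ?Z - {0}. p) = card (carrier ?Z - {0}) * p" by simp
  also have "card (carrier ?Z - {0}) = p - 1" using fZ cardZ by (simp add: card_Diff_singleton)
  finally show ?thesis by simp
qed

lemma step_lemma:
  assumes p: "prime p" and G: "group G" and fin: "finite (carrier G)" and k: "card (carrier G) = p ^ k"
  defines "H \<equiv> transport (\<lambda>(f, k). Node f k) (wreath G (integer_mod_group p))"
  shows "(\<Sum>u\<in>carrier H. (group.ord H u)^2) \<le> (1 + (p - 1) * p) * p * card (carrier G) ^ (p - 1) * (\<Sum>g\<in>carrier G. (group.ord G g)^2)"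
    and "card (carrier H) = card (carrier G) ^ p * p"
    and "max_order H \<ge> p * max_order G"
proof -
  let ?Z = "integer_mod_group p"
  let ?W = "wreath G ?Z"
  have p2: "p \<ge> 2" using p by (simp add: prime_ge_2_nat)
  have cZ: "carrier ?Z = {0..<int p}" using p2 by (simp add: carrier_integer_mod_group)
  have fZ: "finite (carrier ?Z)" using cZ by simp
  have cardZ: "card (carrier ?Z) = p" using cZ by simp
  have W: "group ?W" by (rule wreath_group[OF G]) simp
  have fW: "finite (carrier ?W)" using fin fZ by (simp add: wreath_carrier finite_PiE)
  have pp: "\<forall>a\<in>carrier G. \<forall>b\<in>carrier G. group.ord G a \<le> group.ord G b \<longrightarrow> group.ord G a dvd group.ord G b"
    by (rule pgroup_pp[OF p G fin k])
  have "(\<Sum>u\<in>carrier H. (group.ord H u)^2) = (\<Sum>u\<in>carrier ?W. (group.ord ?W u)^2)"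
    unfolding H_def by (rule transport_sum_ord[OF W inj_Node])
  also have "\<dots> \<le> (\<Sum>x\<in>carrier ?Z. group.ord ?Z x) * card (carrier ?Z) * card (carrier G) ^ (card (carrier ?Z) - 1) * (\<Sum>a\<in>carrier G. (group.ord G a)^2)"
    by (rule wreath_sums(2)[OF G fin pp _ fZ]) simp
  also have "\<dots> \<le> (1 + (p - 1) * p) * card (carrier ?Z) * card (carrier G) ^ (card (carrier ?Z) - 1) * (\<Sum>a\<in>carrier G. (group.ord G a)^2)"
    using sum_ord_Zp[of p] p2 by (intro mult_right_mono) auto
  finally show "(\<Sum>u\<in>carrier H. (group.ord H u)^2) \<le> (1 + (p - 1) * p) * p * card (carrier G) ^ (p - 1) * (\<Sum>g\<in>carrier G. (group.ord G g)^2)"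
    using cardZ by simp
  show "card (carrier H) = card (carrier G) ^ p * p"
    unfolding H_def using transport_card[OF inj_Node, of ?W] wreath_card[OF fin fZ] cardZ by simp
  obtain a where a: "a \<in> carrier G" "group.ord G a = max_order G" using max_order_props(2)[OF G fin] by blast
  obtain u where u: "u \<in> carrier ?W" "group.ord ?W u \<ge> p * group.ord G a"
    using wreath_big_elem[OF G fin p2 a(1)] by blast
  have "group.ord ?W u \<le> max_order ?W" by (rule max_order_props(1)[OF W fW u(1)])
  also have "max_order ?W = max_order H" unfolding H_def by (rule transport_max_order[OF W inj_Node, symmetric])
  finally show "max_order H \<ge> p * max_order G" using u a by simp
qed

lemma psi_bound:
  assumes G: "group G" and fin: "finite (carrier G)"
    and pp: "\<forall>a\<in>carrier G. \<forall>b\<in>carrier G. group.ord G a \<le> group.ord G b \<longrightarrow> group.ord G a dvd group.ord G b"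
    and B: "group B" and finB: "finite (carrier B)"
  shows "psi G B \<le> real (card (carrier B)) * (real (\<Sum>g\<in>carrier G. group.ord G g) / (real (card (carrier G)) * real (max_order G)))"
    and "psi G B \<ge> 0"
proof -
  interpret G: group G by (rule G)
  interpret B: group B by (rule B)
  let ?W = "wreath G B"
  define N where "N = real (card (carrier G))"
  define cB where "cB = real (card (carrier B))"
  define S where "S = real (\<Sum>g\<in>carrier G. G.ord g)"
  define m where "m = real (max_order G)"
  have N0: "N > 0" unfolding N_def using fin G.one_closed by (auto simp: card_gt_0_iff)
  have cB0: "card (carrier B) \<ge> 1" using finB B.one_closed by (metis One_nat_def Suc_leI card_gt_0_iff empty_iff)
  have m1: "m \<ge> 1" unfolding m_def using max_order_props(3)[OF G fin] by simp
  have S0: "S \<ge> 0" unfolding S_def by (simp add: sum_nonneg)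
  have sW: "real (\<Sum>u\<in>carrier ?W. group.ord ?W u) \<le> cB * cB * N ^ (card (carrier B) - 1) * S"
    using wreath_sums(1)[OF G fin pp B finB] unfolding cB_def N_def S_def
    by (metis (mono_tags, lifting) of_nat_le_iff of_nat_mult of_nat_power)
  have cW: "real (card (carrier ?W)) = N ^ card (carrier B) * cB"
    using wreath_card[OF fin finB] unfolding N_def cB_def by simp
  have Npow: "N ^ card (carrier B) = N * N ^ (card (carrier B) - 1)"
    using cB0 by (metis Suc_diff_le diff_Suc_1 power_Suc)
  have avgW: "avg_order ?W \<le> cB * S / N"
  proof -
    have "avg_order ?W = real (\<Sum>u\<in>carrier ?W. group.ord ?W u) / real (card (carrier ?W))"
      unfolding avg_order_def by simp
    also have "\<dots> \<le> cB * cB * N ^ (card (carrier B) - 1) * S / (N ^ card (carrier B) * cB)"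
      unfolding cW using sW N0 cB0 by (intro divide_right_mono) (auto simp: cB_def)
    also have "\<dots> = cB * S / N" unfolding Npow using N0 cB0 by (simp add: cB_def field_simps)
    finally show ?thesis .
  qed
  have avgW0: "avg_order ?W \<ge> 0" unfolding avg_order_def by (simp add: sum_nonneg)
  have avgB: "avg_order B \<ge> 1"
  proof -
    have "real (card (carrier B)) \<le> real (\<Sum>b\<in>carrier B. B.ord b)"
      using B.ord_ge_1[OF finB] by (metis card_eq_sum of_nat_mono sum_mono)
    then show ?thesis unfolding avg_order_def using cB0 by simp
  qed
  have "psi G B = avg_order ?W / (m * avg_order B)" unfolding psi_def m_def by simp
  also have "\<dots> \<le> avg_order ?W / m"
    using avgB m1 avgW0 by (intro divide_left_mono) (auto intro: mult_pos_pos)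
  also have "\<dots> \<le> (cB * S / N) / m" using avgW m1 by (intro divide_right_mono) auto
  also have "\<dots> = cB * (S / (N * m))" by simp
  finally show "psi G B \<le> real (card (carrier B)) * (real (\<Sum>g\<in>carrier G. group.ord G g) / (real (card (carrier G)) * real (max_order G)))"
    unfolding cB_def S_def N_def m_def .
  show "psi G B \<ge> 0" unfolding psi_def avg_order_def by (simp add: sum_nonneg divide_nonneg_nonneg mult_nonneg_nonneg)
qed




theorem corollary5p2:
  fixes A :: "('a, 'c) monoid_scheme" and B :: "('b, 'd) monoid_scheme" and p :: nat
  assumes "prime p"
    and "group A" and "finite (carrier A)" and "\<exists>k. card (carrier A) = p ^ k" and "card (carrier A) > 1"
    and "group B" and "finite (carrier B)" and "\<exists>k. card (carrier B) = p ^ k" and "card (carrier B) > 1"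
  shows "(\<lambda>n. psi (iter_wreath A p n) B) \<longlonglongrightarrow> 0"
proof -
  note p = assms(1) and A = assms(2) and finA = assms(3) and kA = assms(4)
  note B = assms(6) and finB = assms(7)
  have p2: "p \<ge> 2" using p by (simp add: prime_ge_2_nat)
  define G where "G n = iter_wreath A p n" for n
  have props: "group (G n)" "finite (carrier (G n))" "\<exists>k. card (carrier (G n)) = p ^ k" for n
    using iter_props[OF p A finA kA, of n] unfolding G_def by auto
  have GS: "G (Suc n) = transport (\<lambda>(f, k). Node f k) (wreath (G n) (integer_mod_group p))" for n
    by (simp add: G_def)
  define N where "N n = real (card (carrier (G n)))" for n
  define m where "m n = real (max_order (G n))" for n
  define T where "T n = real (\<Sum>g\<in>carrier (G n). (group.ord (G n) g)^2)" for n
  define Sm where "Sm n = real (\<Sum>g\<in>carrier (G n). group.ord (G n) g)" for n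
  define S where "S n = T n / (N n * (m n)^2)" for n
  define c where "c = real (1 + (p - 1) * p)"
  define lam where "lam = c / (real p)^2"
  have N0: "N n > 0" for n
  proof -
    interpret GG: group "G n" by (rule props(1))
    show ?thesis unfolding N_def using props(2)[of n] GG.one_closed by (auto simp: card_gt_0_iff)
  qed
  have m1: "m n \<ge> 1" for n unfolding m_def using max_order_props(3)[OF props(1,2)] by simp
  have T0: "T n \<ge> 0" for n unfolding T_def by (simp add: sum_nonneg)
  have S0: "S n \<ge> 0" for n
  proof -
    have "N n * (m n)^2 > 0" using N0[of n] m1[of n] by simp
    then show ?thesis unfolding S_def using T0[of n] by simp
  qed
  have c_eq: "c = 1 + (real p - 1) * real p" unfolding c_def using p2 by (simp add: of_nat_diff)
  have lam0: "lam \<ge> 0" unfolding lam_def c_def by simp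
  have lam1: "lam < 1" unfolding lam_def c_eq using p2 by (simp add: field_simps power2_eq_square)
  have rec: "S (Suc n) \<le> lam * S n" for n
  proof -
    obtain k where k: "card (carrier (G n)) = p ^ k" using props(3) by blast
    note st = step_lemma[OF p props(1,2) k, folded GS]
    have hT: "T (Suc n) \<le> c * real p * N n ^ (p - 1) * T n"
      using st(1) unfolding T_def N_def c_def by (metis (mono_tags, lifting) of_nat_le_iff of_nat_mult of_nat_power)
    have hN: "N (Suc n) = N n ^ p * real p" using st(2) unfolding N_def by simp
    have hm: "m (Suc n) \<ge> real p * m n" using st(3) unfolding m_def
      by (metis of_nat_le_iff of_nat_mult)
    have Npow: "N n ^ p = N n * N n ^ (p - 1)" using p2 by (metis Suc_diff_le diff_Suc_1 one_le_numeral order_trans power_Suc)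
    have pos: "N n ^ p * real p * (real p * m n)^2 > 0" using N0[of n] m1[of n] p2 by (intro mult_pos_pos) auto
    have "S (Suc n) = T (Suc n) / (N (Suc n) * (m (Suc n))^2)" by (simp add: S_def)
    also have "\<dots> \<le> T (Suc n) / (N n ^ p * real p * (real p * m n)^2)"
    proof -
      have a: "0 \<le> N n ^ p * real p" using N0[of n] by simp
      have b: "(real p * m n)^2 \<le> (m (Suc n))^2" using hm m1[of n] p2 by (intro power_mono) auto
      have c: "N n ^ p * real p * (real p * m n)^2 \<le> N n ^ p * real p * (m (Suc n))^2"
        using mult_left_mono[OF b a] .
      have d: "0 < N n ^ p * real p * (m (Suc n))^2 * (N n ^ p * real p * (real p * m n)^2)"
      proof -
        have e: "0 < N n ^ p * real p * (m (Suc n))^2" using pos c by linarith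
        show ?thesis by (rule mult_pos_pos[OF e pos])
      qed
      show ?thesis unfolding hN using T0[of "Suc n"] c d by (intro divide_left_mono) auto
    qed
    also have "\<dots> \<le> c * real p * N n ^ (p - 1) * T n / (N n ^ p * real p * (real p * m n)^2)"
      using hT pos by (intro divide_right_mono) auto
    also have "\<dots> = lam * S n"
      unfolding Npow lam_def S_def using N0[of n] m1[of n] p2 by (simp add: field_simps power2_eq_square)
    finally show ?thesis .
  qed
  have S0le: "S 0 \<le> 1"
  proof -
    have "(\<Sum>g\<in>carrier (G 0). (group.ord (G 0) g)^2) \<le> (\<Sum>g\<in>carrier (G 0). (max_order (G 0))^2)"
      using max_order_props(1)[OF props(1,2)] by (intro sum_mono power_mono) auto
    also have "(\<Sum>g\<in>carrier (G 0). (max_order (G 0))^2) = card (carrier (G 0)) * (max_order (G 0))^2"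
      by simp
    finally have "real (\<Sum>g\<in>carrier (G 0). (group.ord (G 0) g)^2) \<le> real (card (carrier (G 0)) * (max_order (G 0))^2)"
      by (simp only: of_nat_le_iff)
    then have "T 0 \<le> N 0 * (m 0)^2" unfolding T_def N_def m_def by simp
    moreover have "N 0 * (m 0)^2 > 0" using N0[of 0] m1[of 0] by simp
    ultimately show ?thesis unfolding S_def by simp
  qed
  have Slam: "S n \<le> lam ^ n" for n
  proof (induction n)
    case 0 then show ?case using S0le by simp
  next
    case (Suc n)
    have "S (Suc n) \<le> lam * S n" by (rule rec)
    also have "\<dots> \<le> lam * lam ^ n" using Suc lam0 by (intro mult_left_mono) auto
    finally show ?case by simp
  qed
  have ratio: "Sm n / (N n * m n) \<le> sqrt (S n)" for n
  proof (rule real_le_rsqrt)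
    have cs: "(Sm n)^2 \<le> N n * T n"
      using cauchy_sum[OF props(2)[of n], of "\<lambda>g. real (group.ord (G n) g)"]
      unfolding Sm_def N_def T_def by simp
    have "(Sm n / (N n * m n))^2 = (Sm n)^2 / (N n * N n * (m n)^2)" by (simp add: power2_eq_square)
    also have "\<dots> \<le> N n * T n / (N n * N n * (m n)^2)"
      using cs N0 m1 by (intro divide_right_mono) auto
    also have "\<dots> = S n" unfolding S_def using N0 m1 by (simp add: field_simps power2_eq_square)
    finally show "(Sm n / (N n * m n))^2 \<le> S n" .
  qed
  define cB where "cB = real (card (carrier B))"
  have bound: "psi (iter_wreath A p n) B \<le> cB * sqrt lam ^ n" for n
  proof -
    obtain k where k: "card (carrier (G n)) = p ^ k" using props(3) by blast
    have pp: "\<forall>a\<in>carrier (G n). \<forall>b\<in>carrier (G n). group.ord (G n) a \<le> group.ord (G n) b \<longrightarrow> group.ord (G n) a dvd group.ord (G n) b"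
      by (rule pgroup_pp[OF p props(1,2) k])
    have "psi (G n) B \<le> cB * (Sm n / (N n * m n))"
      using psi_bound(1)[OF props(1,2) pp B finB] unfolding cB_def Sm_def N_def m_def .
    also have "\<dots> \<le> cB * sqrt (lam ^ n)"
    proof -
      have r: "Sm n / (N n * m n) \<le> sqrt (lam ^ n)"
        using ratio[of n] real_sqrt_le_mono[OF Slam[of n]] by linarith
      have "cB \<ge> 0" unfolding cB_def by simp
      then show ?thesis using r by (rule mult_left_mono[rotated])
    qed
    also have "\<dots> = cB * sqrt lam ^ n" by (simp add: real_sqrt_power)
    finally show ?thesis unfolding G_def .
  qed
  have nonneg: "psi (iter_wreath A p n) B \<ge> 0" for n
  proof -
    obtain k where k: "card (carrier (G n)) = p ^ k" using props(3) by blast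
    have pp: "\<forall>a\<in>carrier (G n). \<forall>b\<in>carrier (G n). group.ord (G n) a \<le> group.ord (G n) b \<longrightarrow> group.ord (G n) a dvd group.ord (G n) b"
      by (rule pgroup_pp[OF p props(1,2) k])
    show ?thesis using psi_bound(2)[OF props(1,2) pp B finB] unfolding G_def .
  qed
  have lim: "(\<lambda>n. cB * sqrt lam ^ n) \<longlonglongrightarrow> 0"
  proof -
    have "sqrt lam < 1" using lam0 lam1 by simp
    then have "(\<lambda>n. sqrt lam ^ n) \<longlonglongrightarrow> 0" using lam0 by (intro LIMSEQ_power_zero) simp
    then show ?thesis using tendsto_mult[OF tendsto_const, of _ 0 sequentially cB] by simp
  qed
  show ?thesis
    by (rule tendsto_sandwich[OF _ _ tendsto_const lim]) (use nonneg bound in auto)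
qed


end
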